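(* Let $(k,|\cdot|)$ be a complete valued field and $\mu$ a probability measure with countable support on $\mathrm{SL}(2,k)$, supported on upper triangular matrices $\gamma=\begin{pmatrix}\alpha(\gamma)&\beta(\gamma)\\0&\alpha(\gamma)^{-1}\end{pmatrix}$, and such that there exists $\delta>0$ with $\int(\log\|\gamma\|)^{1+\delta}\,d\mu(\gamma)<\infty$. Then $$\chi(\mu)=\left|\int\log|\alpha(\gamma)|\,d\mu(\gamma)\right|=\frac12\left|\int\log|a(\gamma)|\,d\mu(\gamma)\right|,$$ where $a(\gamma)=\alpha(\gamma)^2$. In particular, if $\mu$ is symmetric then $\chi(\mu)=0$.
   Context: $\|\cdot\|$ is the operator norm on $\mathrm{SL}(2,k)$ associated to the max norm on $k^2$ (for non-Archimedean $k$, the max of the entries' absolute values). $\chi(\mu)=\lim_n\frac1n\int\log\|\gamma\|\,d\mu^n(\gamma)$ with $\mu^n$ the $n$-th convolution power. Symmetric means invariant under $\gamma\mapsto\gamma^{-1}$. Upper triangular matrices correspond to affine Möbius maps $z\mapsto a z+b$ with $a=\alpha^2$, $b=\alpha\beta$. *)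

theory Defs
  imports "HOL-Probability.Probability"
begin

definition abs_value :: "('k::field \<Rightarrow> real) \<Rightarrow> bool" where
  "abs_value v \<longleftrightarrow> (\<forall>x. 0 \<le> v x) \<and> (\<forall>x. v x = 0 \<longleftrightarrow> x = 0)
     \<and> (\<forall>x y. v (x * y) = v x * v y) \<and> (\<forall>x y. v (x + y) \<le> v x + v y)"

definition complete_wrt :: "('k::field \<Rightarrow> real) \<Rightarrow> bool" where
  "complete_wrt v \<longleftrightarrow> (\<forall>X::nat \<Rightarrow> 'k.
      (\<forall>e>0. \<exists>N. \<forall>m\<ge>N. \<forall>n\<ge>N. v (X m - X n) < e) \<longrightarrow>
      (\<exists>L. \<forall>e>0. \<exists>N. \<forall>n\<ge>N. v (X n - L) < e))"

text \<open>2x2 matrices ((a,b),(c,d)) written as (a,b,c,d); vectors in k^2 as pairs.\<close>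
type_synonym 'k mat2 = "'k \<times> 'k \<times> 'k \<times> 'k"

fun mmult :: "'k::field mat2 \<Rightarrow> 'k mat2 \<Rightarrow> 'k mat2" where
  "mmult (a, b, c, d) (a', b', c', d') =
     (a * a' + b * c', a * b' + b * d', c * a' + d * c', c * b' + d * d')"

definition mone :: "'k::field mat2" where "mone = (1, 0, 0, 1)"

fun mdet :: "'k::field mat2 \<Rightarrow> 'k" where "mdet (a, b, c, d) = a * d - b * c"

text \<open>Inverse of a matrix of determinant 1.\<close>
fun minv_sl2 :: "'k::field mat2 \<Rightarrow> 'k mat2" where
  "minv_sl2 (a, b, c, d) = (d, - b, - c, a)"

fun mapply :: "'k::field mat2 \<Rightarrow> 'k \<times> 'k \<Rightarrow> 'k \<times> 'k" where
  "mapply (a, b, c, d) (x, y) = (a * x + b * y, c * x + d * y)"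

fun entry11 :: "'k::field mat2 \<Rightarrow> 'k" where "entry11 (a, b, c, d) = a"
fun entry21 :: "'k::field mat2 \<Rightarrow> 'k" where "entry21 (a, b, c, d) = c"

fun maxnorm :: "('k::field \<Rightarrow> real) \<Rightarrow> 'k \<times> 'k \<Rightarrow> real" where
  "maxnorm v (x, y) = max (v x) (v y)"

definition opnorm :: "('k::field \<Rightarrow> real) \<Rightarrow> 'k mat2 \<Rightarrow> real" where
  "opnorm v g = Sup {maxnorm v (mapply g x) / maxnorm v x | x. x \<noteq> (0, 0)}"

primrec conv_pow :: "'k::field mat2 pmf \<Rightarrow> nat \<Rightarrow> 'k mat2 pmf" where
  "conv_pow \<mu> 0 = return_pmf mone"
| "conv_pow \<mu> (Suc n) = bind_pmf (conv_pow \<mu> n) (\<lambda>g. map_pmf (\<lambda>h. mmult g h) \<mu>)"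

end

theory Submission
  imports Defs
begin

lemma rep_Suc: "replicate_pmf (Suc n) p = map_pmf (\<lambda>(x,xs). x#xs) (pair_pmf p (replicate_pmf n p))"
  by (simp add: pair_pmf_def map_bind_pmf bind_return_pmf map_pmf_def bind_assoc_pmf)

lemma rep_snoc: "replicate_pmf (Suc n) p = bind_pmf (replicate_pmf n p) (\<lambda>xs. map_pmf (\<lambda>x. xs @ [x]) p)"
proof -
  have "replicate_pmf (n + 1) p = bind_pmf (replicate_pmf n p) (\<lambda>xs. map_pmf (\<lambda>x. xs @ [x]) p)"
    unfolding replicate_pmf_distrib replicate_pmf_1
    by (simp add: map_pmf_def bind_assoc_pmf bind_return_pmf)
  thus ?thesis by simp
qed

lemma nth_marg: "i < n \<Longrightarrow> map_pmf (\<lambda>xs. xs ! i) (replicate_pmf n p) = p"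
proof (induction n arbitrary: i)
  case 0 then show ?case by simp
next
  case (Suc n)
  show ?case
  proof (cases i)
    case 0
    then show ?thesis unfolding rep_Suc pmf.map_comp
      by (simp add: o_def case_prod_unfold map_fst_pair_pmf)
  next
    case (Suc j)
    have "map_pmf (\<lambda>xs. xs ! i) (replicate_pmf (Suc n) p) = map_pmf (\<lambda>xs. xs ! j) (map_pmf snd (pair_pmf p (replicate_pmf n p)))"
      unfolding rep_Suc pmf.map_comp using Suc by (simp add: o_def case_prod_unfold)
    also have "\<dots> = p" using Suc.IH[of j] Suc Suc.prems by (simp add: map_snd_pair_pmf)
    finally show ?thesis .
  qed
qed

lemma pair_marg: "i < n \<Longrightarrow> j < n \<Longrightarrow> i \<noteq> j \<Longrightarrow>
  map_pmf (\<lambda>xs. (xs ! i, xs ! j)) (replicate_pmf n p) = pair_pmf p p"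
proof (induction n arbitrary: i j)
  case 0 then show ?case by simp
next
  case (Suc n)
  show ?case
  proof (cases i)
    case 0
    then obtain j' where j: "j = Suc j'" using Suc.prems by (cases j) auto
    have "map_pmf (\<lambda>xs. (xs ! i, xs ! j)) (replicate_pmf (Suc n) p) = map_pmf (\<lambda>(a,b). (a, b ! j')) (pair_pmf p (replicate_pmf n p))"
      unfolding rep_Suc pmf.map_comp using 0 j by (simp add: o_def case_prod_unfold)
    also have "\<dots> = pair_pmf (map_pmf id p) (map_pmf (\<lambda>b. b ! j') (replicate_pmf n p))"
      by (subst map_pair[symmetric]) simp
    also have "\<dots> = pair_pmf p p" using nth_marg[of j' n p] j Suc.prems by simp
    finally show ?thesis .
  next
    case (Suc i')
    show ?thesis
    proof (cases j)
      case 0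
      have "map_pmf (\<lambda>xs. (xs ! i, xs ! j)) (replicate_pmf (Suc n) p) = map_pmf (\<lambda>(a,b). (b ! i', a)) (pair_pmf p (replicate_pmf n p))"
        unfolding rep_Suc pmf.map_comp using 0 Suc by (simp add: o_def case_prod_unfold)
      also have "\<dots> = map_pmf (\<lambda>(x, y). (y, x)) (pair_pmf (map_pmf id p) (map_pmf (\<lambda>b. b ! i') (replicate_pmf n p)))"
        by (subst map_pair[symmetric]) (simp add: pmf.map_comp o_def case_prod_unfold)
      also have "\<dots> = map_pmf (\<lambda>(x, y). (y, x)) (pair_pmf p p)" using nth_marg[of i' n p] Suc Suc.prems
        by simp
      also have "\<dots> = pair_pmf p p" by (rule pair_commute_pmf[symmetric])
      finally show ?thesis .
    next
      case (Suc j')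
      have "map_pmf (\<lambda>xs. (xs ! i, xs ! j)) (replicate_pmf (Suc n) p) = map_pmf (\<lambda>b. (b ! i', b ! j')) (map_pmf snd (pair_pmf p (replicate_pmf n p)))"
        unfolding rep_Suc pmf.map_comp using \<open>i = Suc i'\<close> Suc by (simp add: o_def case_prod_unfold)
      also have "\<dots> = pair_pmf p p" using Suc.IH[of i' j'] \<open>i = Suc i'\<close> Suc Suc.prems by (simp add: map_snd_pair_pmf)
      finally show ?thesis .
    qed
  qed
qed

lemma rep_rev: "map_pmf rev (replicate_pmf n p) = replicate_pmf n p"
proof (induction n)
  case 0 then show ?case by simp
next
  case (Suc n)
  have "map_pmf rev (replicate_pmf (Suc n) p) = bind_pmf p (\<lambda>x. bind_pmf (map_pmf rev (replicate_pmf n p)) (\<lambda>ys. return_pmf (ys @ [x])))"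
    by (simp add: map_bind_pmf bind_map_pmf bind_return_pmf map_pmf_def bind_assoc_pmf)
  also have "\<dots> = bind_pmf p (\<lambda>x. bind_pmf (replicate_pmf n p) (\<lambda>ys. return_pmf (ys @ [x])))" using Suc by simp
  also have "\<dots> = bind_pmf (replicate_pmf n p) (\<lambda>ys. bind_pmf p (\<lambda>x. return_pmf (ys @ [x])))"
    by (rule bind_commute_pmf)
  also have "\<dots> = replicate_pmf (Suc n) p" unfolding rep_snoc by (simp add: map_pmf_def)
  finally show ?case .
qed

lemma AE_rep: "AE xs in measure_pmf (replicate_pmf n p). length xs = n \<and> set xs \<subseteq> set_pmf p"
  by (rule AE_pmfI) (auto simp: set_replicate_pmf)

lemma int_nth:
  fixes f :: "'a \<Rightarrow> real"
  assumes "integrable (measure_pmf p) f" "i < n"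
  shows "integrable (measure_pmf (replicate_pmf n p)) (\<lambda>xs. f (xs ! i))"
    "measure_pmf.expectation (replicate_pmf n p) (\<lambda>xs. f (xs ! i)) = measure_pmf.expectation p f"
proof -
  have e: "map_pmf (\<lambda>xs. xs ! i) (replicate_pmf n p) = p" using nth_marg assms(2) by blast
  show "integrable (measure_pmf (replicate_pmf n p)) (\<lambda>xs. f (xs ! i))"
    using assms(1) e integrable_map_pmf_eq[of "\<lambda>xs. xs ! i" "replicate_pmf n p" f] by simp
  show "measure_pmf.expectation (replicate_pmf n p) (\<lambda>xs. f (xs ! i)) = measure_pmf.expectation p f"
    using e integral_map_pmf[of "\<lambda>xs. xs ! i" "replicate_pmf n p" f] by simp
qed

lemma AE_sum_nth: "AE xs in measure_pmf (replicate_pmf n p). sum_list (map f xs) = (\<Sum>i<n. f (xs ! i))"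
  using AE_rep[of n p] by eventually_elim (auto simp: sum_list_sum_nth atLeast0LessThan)

lemma int_sum:
  fixes f :: "'a \<Rightarrow> real"
  assumes "integrable (measure_pmf p) f"
  shows "integrable (measure_pmf (replicate_pmf n p)) (\<lambda>xs. sum_list (map f xs))"
    "measure_pmf.expectation (replicate_pmf n p) (\<lambda>xs. sum_list (map f xs)) = n * measure_pmf.expectation p f"
proof -
  have i: "integrable (measure_pmf (replicate_pmf n p)) (\<lambda>xs. \<Sum>i<n. f (xs ! i))"
    by (rule Bochner_Integration.integrable_sum) (auto intro: int_nth(1)[OF assms])
  then show "integrable (measure_pmf (replicate_pmf n p)) (\<lambda>xs. sum_list (map f xs))"
    using integrable_cong_AE[OF _ _ AE_sum_nth[where n=n and p=p and f=f]] by simp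
  have "measure_pmf.expectation (replicate_pmf n p) (\<lambda>xs. sum_list (map f xs))
     = measure_pmf.expectation (replicate_pmf n p) (\<lambda>xs. \<Sum>i<n. f (xs ! i))"
    by (intro integral_cong_AE AE_sum_nth) auto
  also have "\<dots> = (\<Sum>i<n. measure_pmf.expectation (replicate_pmf n p) (\<lambda>xs. f (xs ! i)))"
    using int_nth(1)[OF assms] by (intro Bochner_Integration.integral_sum) auto
  also have "\<dots> = n * measure_pmf.expectation p f" using int_nth(2)[OF assms] by simp
  finally show "measure_pmf.expectation (replicate_pmf n p) (\<lambda>xs. sum_list (map f xs)) = n * measure_pmf.expectation p f" .
qed

lemma pair_prod_nonneg:
  fixes f g :: "'a \<Rightarrow> real"
  assumes "\<And>x. 0 \<le> f x" "\<And>x. f x \<le> c" "\<And>x. 0 \<le> g x" "\<And>x. g x \<le> c"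
  shows "measure_pmf.expectation (pair_pmf p q) (\<lambda>z. f (fst z) * g (snd z))
     = measure_pmf.expectation p f * measure_pmf.expectation q g"
proof -
  have c: "0 \<le> c" using assms(1,2) order_trans by blast
  have ip: "integrable (measure_pmf p) f" using assms by (intro measure_pmf.integrable_const_bound[where B=c]) auto
  have iq: "integrable (measure_pmf q) g" using assms by (intro measure_pmf.integrable_const_bound[where B=c]) auto
  have ipq: "integrable (measure_pmf (pair_pmf p q)) (\<lambda>z. f (fst z) * g (snd z))"
    using assms c by (intro measure_pmf.integrable_const_bound[where B="c*c"]) (auto intro!: mult_mono)
  have "ennreal (measure_pmf.expectation (pair_pmf p q) (\<lambda>z. f (fst z) * g (snd z)))
     = (\<integral>\<^sup>+z. ennreal (f (fst z) * g (snd z)) \<partial>pair_pmf p q)"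
    using ipq assms by (intro nn_integral_eq_integral[symmetric]) auto
  also have "\<dots> = (\<integral>\<^sup>+a. \<integral>\<^sup>+b. ennreal (f a) * ennreal (g b) \<partial>q \<partial>p)"
    using assms by (simp add: nn_integral_pair_pmf' ennreal_mult)
  also have "\<dots> = (\<integral>\<^sup>+a. ennreal (f a) * (\<integral>\<^sup>+b. ennreal (g b) \<partial>q) \<partial>p)"
    by (simp add: nn_integral_cmult)
  also have "\<dots> = (\<integral>\<^sup>+a. ennreal (f a) \<partial>p) * (\<integral>\<^sup>+b. ennreal (g b) \<partial>q)"
    by (simp add: nn_integral_multc)
  also have "\<dots> = ennreal (measure_pmf.expectation p f) * ennreal (measure_pmf.expectation q g)"
    using ip iq assms by (simp add: nn_integral_eq_integral)
  also have "\<dots> = ennreal (measure_pmf.expectation p f * measure_pmf.expectation q g)"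
    using assms by (simp add: ennreal_mult integral_nonneg)
  finally show ?thesis
    using assms by (subst (asm) ennreal_inj) (auto intro!: integral_nonneg mult_nonneg_nonneg)
qed

lemma pair_prod:
  fixes f g :: "'a \<Rightarrow> real"
  assumes "\<And>x. \<bar>f x\<bar> \<le> c" "\<And>x. \<bar>g x\<bar> \<le> c"
  shows "measure_pmf.expectation (pair_pmf p q) (\<lambda>z. f (fst z) * g (snd z))
     = measure_pmf.expectation p f * measure_pmf.expectation q g"
proof -
  let ?E = "measure_pmf.expectation"
  have c: "0 \<le> c" using assms(1) abs_ge_zero order_trans by blast
  have ip: "integrable (measure_pmf p) f" using assms by (intro measure_pmf.integrable_const_bound[where B=c]) auto
  have iq: "integrable (measure_pmf q) g" using assms by (intro measure_pmf.integrable_const_bound[where B=c]) auto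
  have ipq: "integrable (measure_pmf (pair_pmf p q)) (\<lambda>z. f (fst z) * g (snd z))"
    using assms c by (intro measure_pmf.integrable_const_bound[where B="c*c"]) (auto simp: abs_mult intro!: mult_mono)
  have ipf: "integrable (measure_pmf (pair_pmf p q)) (\<lambda>z. f (fst z))"
    using assms by (intro measure_pmf.integrable_const_bound[where B=c]) auto
  have ipg: "integrable (measure_pmf (pair_pmf p q)) (\<lambda>z. g (snd z))"
    using assms by (intro measure_pmf.integrable_const_bound[where B=c]) auto
  have "?E (pair_pmf p q) (\<lambda>z. (f (fst z) + c) * (g (snd z) + c)) = ?E p (\<lambda>x. f x + c) * ?E q (\<lambda>x. g x + c)"
  proof (rule pair_prod_nonneg[where c="2*c"])
    fix x
    show "0 \<le> f x + c" "f x + c \<le> 2 * c" "0 \<le> g x + c" "g x + c \<le> 2 * c"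
      using assms(1)[of x] assms(2)[of x] by auto
  qed
  moreover have "?E (pair_pmf p q) (\<lambda>z. (f (fst z) + c) * (g (snd z) + c))
    = ?E (pair_pmf p q) (\<lambda>z. f (fst z) * g (snd z)) + c * ?E p f + c * ?E q g + c * c"
  proof -
    have "?E (pair_pmf p q) (\<lambda>z. (f (fst z) + c) * (g (snd z) + c))
      = ?E (pair_pmf p q) (\<lambda>z. f (fst z) * g (snd z) + c * f (fst z) + c * g (snd z) + c * c)"
      by (simp add: algebra_simps)
    also have "\<dots> = ?E (pair_pmf p q) (\<lambda>z. f (fst z) * g (snd z)) + ?E (pair_pmf p q) (\<lambda>z. c * f (fst z))
        + ?E (pair_pmf p q) (\<lambda>z. c * g (snd z)) + c * c"
      using ipq ipf ipg by simp
    also have "\<dots> = ?E (pair_pmf p q) (\<lambda>z. f (fst z) * g (snd z)) + c * ?E p f + c * ?E q g + c * c"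
      by simp
    finally show ?thesis .
  qed
  moreover have "?E p (\<lambda>x. f x + c) = ?E p f + c" using ip by simp
  moreover have "?E q (\<lambda>x. g x + c) = ?E q g + c" using iq by simp
  ultimately show ?thesis by (simp add: algebra_simps)
qed

fun runmax :: "('a \<Rightarrow> real) \<Rightarrow> 'a list \<Rightarrow> real" where
  "runmax f [] = 0"
| "runmax f (x # xs) = max 0 (f x + runmax f xs)"

fun mlmax :: "('a \<Rightarrow> real) \<Rightarrow> 'a list \<Rightarrow> real" where
  "mlmax f [] = 0"
| "mlmax f (x # xs) = max (f x) (mlmax f xs)"

definition psum :: "('a \<Rightarrow> real) \<Rightarrow> 'a list \<Rightarrow> nat \<Rightarrow> real" where
  "psum f xs k = sum_list (map f (take k xs))"

lemma runmax_nonneg: "0 \<le> runmax f xs"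
  by (induction xs) auto

lemma runmax_ge_sum: "sum_list (map f xs) \<le> runmax f xs"
  by (induction xs) auto

lemma runmax_append1: "runmax f xs \<le> runmax f (xs @ ys)"
proof (induction xs)
  case Nil then show ?case using runmax_nonneg by simp
next
  case (Cons x xs) then show ?case by auto
qed

lemma runmax_append2: "sum_list (map f xs) + runmax f ys \<le> runmax f (xs @ ys)"
  by (induction xs) auto

lemma runmax_le_abs: "runmax f xs \<le> sum_list (map (\<lambda>x. \<bar>f x\<bar>) xs)"
proof (induction xs)
  case Nil then show ?case by simp
next
  case (Cons x xs)
  have "0 \<le> sum_list (map (\<lambda>x. \<bar>f x\<bar>) xs)" by (rule sum_list_nonneg) auto
  then show ?case using Cons by auto
qed

lemma runmax_abs: "\<bar>runmax f xs\<bar> \<le> sum_list (map (\<lambda>x. \<bar>f x\<bar>) xs)"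
  using runmax_le_abs[of f xs] runmax_nonneg[of f xs] by simp

lemma runmax_mono_add:
  assumes "\<And>x. x \<in> set xs \<Longrightarrow> f x \<le> g x + h x" "\<And>x. 0 \<le> h x"
  shows "runmax f xs \<le> runmax g xs + sum_list (map h xs)"
  using assms(1)
proof (induction xs)
  case Nil then show ?case by simp
next
  case (Cons x xs)
  have s: "0 \<le> sum_list (map h xs)" by (rule sum_list_nonneg) (auto intro: assms(2))
  have "f x \<le> g x + h x" using Cons.prems by auto
  moreover have "runmax f xs \<le> runmax g xs + sum_list (map h xs)" using Cons by auto
  ultimately show ?case using s assms(2)[of x] runmax_nonneg[of g xs] by auto
qed

lemma runmax_attained: "\<exists>k\<le>length xs. runmax f xs = psum f xs k"
proof (induction xs)
  case Nil then show ?case by (simp add: psum_def)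
next
  case (Cons x xs)
  then obtain k where k: "k \<le> length xs" "runmax f xs = psum f xs k" by blast
  show ?case
  proof (cases "0 \<le> f x + runmax f xs")
    case True
    then have "runmax f (x # xs) = psum f (x # xs) (Suc k)" using k by (simp add: psum_def)
    then show ?thesis using k by (intro exI[of _ "Suc k"]) auto
  next
    case False
    then have "runmax f (x # xs) = psum f (x # xs) 0" by (simp add: psum_def)
    then show ?thesis by (intro exI[of _ 0]) auto
  qed
qed

lemma mlmax_nonneg: "0 \<le> mlmax f xs"
  by (induction xs) auto

lemma mlmax_ge: "x \<in> set xs \<Longrightarrow> f x \<le> mlmax f xs"
  by (induction xs) auto

lemma mlmax_append: "mlmax f (xs @ ys) = max (mlmax f xs) (mlmax f ys)"
proof (induction xs)
  case Nil then show ?case using mlmax_nonneg[of f ys] by simp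
next
  case (Cons x xs) then show ?case by (simp add: max.assoc)
qed

lemma mlmax_le: "0 \<le> K \<Longrightarrow> mlmax f xs \<le> K + sum_list (map (\<lambda>x. max 0 (f x - K)) xs)"
proof (induction xs)
  case Nil then show ?case by simp
next
  case (Cons x xs)
  have "0 \<le> sum_list (map (\<lambda>x. max 0 (f x - K)) xs)" by (rule sum_list_nonneg) auto
  then show ?case using Cons by auto
qed

lemma mlmax_abs: "\<bar>mlmax f xs\<bar> \<le> sum_list (map (\<lambda>x. \<bar>f x\<bar>) xs)"
  using mlmax_le[of 0 f xs] mlmax_nonneg[of f xs]
  by (smt (verit, best) sum_list_mono)

lemma sum_list_le_len: fixes f :: "'a \<Rightarrow> real" and c :: real shows "(\<And>x. x \<in> set xs \<Longrightarrow> f x \<le> c) \<Longrightarrow> sum_list (map f xs) \<le> length xs * c"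
proof (induction xs)
  case (Cons a xs)
  then have "f a \<le> c" "sum_list (map f xs) \<le> length xs * c" by auto
  then show ?case by (simp add: algebra_simps)
qed simp

lemma abs_le_half: "(t::real) > 0 \<Longrightarrow> p\<^sup>2 \<le> W \<Longrightarrow> p \<le> (W / t + t) / 2"
proof -
  assume t: "t > 0" and pW: "p\<^sup>2 \<le> W"
  have "0 \<le> (p - t)\<^sup>2" by simp
  then have "2 * p * t \<le> p\<^sup>2 + t\<^sup>2" by (simp add: power2_diff)
  also have "\<dots> \<le> W + t * t" using pW by (simp add: power2_eq_square)
  finally have "2 * p * t \<le> W + t * t" .
  then have "p \<le> (W + t * t) / (2 * t)" using t by (simp add: field_simps)
  also have "\<dots> = (W / t + t) / 2" using t by (simp add: field_simps)
  finally show ?thesis .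
qed

lemma runmax_block:
  assumes "\<And>x. \<bar>f x\<bar> \<le> c" "L > 0" "t > 0" "length xs = n"
  shows "runmax f xs \<le> c * L + ((\<Sum>q\<le>n div L. (psum f xs (q * L))\<^sup>2) / t + t) / 2"
proof -
  obtain k where k: "k \<le> length xs" "runmax f xs = psum f xs k" using runmax_attained by blast
  define q where "q = k div L"
  have kk: "k = q * L + k mod L" unfolding q_def by simp
  have "take k xs = take (q * L) xs @ take (k mod L) (drop (q * L) xs)"
    by (subst kk) (rule take_add)
  then have "psum f xs k = psum f xs (q * L) + sum_list (map f (take (k mod L) (drop (q * L) xs)))"
    by (simp add: psum_def)
  moreover have "sum_list (map f (take (k mod L) (drop (q * L) xs))) \<le> length (take (k mod L) (drop (q * L) xs)) * c"
    by (rule sum_list_le_len) (use assms(1) in \<open>auto simp: abs_le_iff\<close>)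
  moreover have "length (take (k mod L) (drop (q * L) xs)) \<le> L"
  proof -
    have "k mod L < L" using assms(2) by simp
    then show ?thesis by simp
  qed
  moreover have c: "0 \<le> c" using assms(1) abs_ge_zero order_trans by blast
  ultimately have "psum f xs k \<le> psum f xs (q * L) + c * L"
    by (smt (verit, best) mult.commute mult_right_mono of_nat_mono)
  moreover have "(psum f xs (q * L))\<^sup>2 \<le> (\<Sum>q\<le>n div L. (psum f xs (q * L))\<^sup>2)"
  proof -
    have "q \<le> n div L" unfolding q_def using k assms(4) by (simp add: div_le_mono)
    then show ?thesis by (intro member_le_sum) auto
  qed
  then have "psum f xs (q * L) \<le> ((\<Sum>q\<le>n div L. (psum f xs (q * L))\<^sup>2) / t + t) / 2"
    using abs_le_half assms(3) by blast
  ultimately show ?thesis using k by linarith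
qed

lemma abs_sum_list_le: fixes y :: "'a \<Rightarrow> real" and c :: real
  assumes "\<And>x. \<bar>y x\<bar> \<le> c"
  shows "\<bar>sum_list (map y zs)\<bar> \<le> length zs * c"
proof -
  have "\<bar>sum_list (map y zs)\<bar> \<le> sum_list (map (\<lambda>x. \<bar>y x\<bar>) zs)"
    by (induction zs) (auto intro: order_trans[OF abs_triangle_ineq])
  also have "\<dots> \<le> length zs * c" by (rule sum_list_le_len) (use assms in auto)
  finally show ?thesis .
qed

lemma psum_nth: "j \<le> length xs \<Longrightarrow> psum y xs j = (\<Sum>i<j. y (xs ! i))"
  unfolding psum_def by (simp add: sum_list_sum_nth atLeast0LessThan min_def)

lemma sq_bound:
  fixes y :: "'a \<Rightarrow> real"
  assumes yb: "\<And>x. \<bar>y x\<bar> \<le> c" and y0: "measure_pmf.expectation p y = 0" and j: "j \<le> n"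
  shows "integrable (measure_pmf (replicate_pmf n p)) (\<lambda>xs. (psum y xs j)\<^sup>2)"
    "measure_pmf.expectation (replicate_pmf n p) (\<lambda>xs. (psum y xs j)\<^sup>2) \<le> j * c\<^sup>2"
proof -
  let ?E = "measure_pmf.expectation"
  let ?R = "replicate_pmf n p"
  have c: "0 \<le> c" using yb abs_ge_zero order_trans by blast
  have ae: "AE xs in measure_pmf ?R. (psum y xs j)\<^sup>2 = (\<Sum>i<j. \<Sum>k<j. y (xs ! i) * y (xs ! k))"
    using AE_rep[of n p] by eventually_elim (use j in \<open>simp add: psum_nth power2_eq_square sum_product\<close>)
  have yy2: "\<bar>y a * y b\<bar> \<le> c * c" for a b
    using yb[of a] yb[of b] c by (simp add: abs_mult mult_mono)
  have yy3: "y a * y a \<le> c * c" for a using yy2[of a a] by simp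
  have iyy: "integrable (measure_pmf ?R) (\<lambda>xs. y (xs ! i) * y (xs ! k))" for i k
    using yy2 by (intro measure_pmf.integrable_const_bound[where B="c*c"]) auto
  have isum: "integrable (measure_pmf ?R) (\<lambda>xs. \<Sum>i<j. \<Sum>k<j. y (xs ! i) * y (xs ! k))"
    using iyy by (intro Bochner_Integration.integrable_sum) auto
  show "integrable (measure_pmf ?R) (\<lambda>xs. (psum y xs j)\<^sup>2)"
    using integrable_cong_AE[OF _ _ ae] isum by simp
  have yy: "?E ?R (\<lambda>xs. y (xs ! i) * y (xs ! k)) = (if i = k then ?E p (\<lambda>x. y x * y x) else 0)"
    if "i < j" "k < j" for i k
  proof (cases "i = k")
    case True
    have "integrable (measure_pmf p) (\<lambda>x. y x * y x)"
      using yy2 yy3 by (intro measure_pmf.integrable_const_bound[where B="c*c"]) auto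
    then show ?thesis using True int_nth(2)[of p "\<lambda>x. y x * y x" i n] that j by simp
  next
    case False
    have "?E ?R (\<lambda>xs. y (xs ! i) * y (xs ! k)) = ?E (map_pmf (\<lambda>xs. (xs ! i, xs ! k)) ?R) (\<lambda>z. y (fst z) * y (snd z))"
      by simp
    also have "\<dots> = ?E (pair_pmf p p) (\<lambda>z. y (fst z) * y (snd z))"
      using pair_marg[of i n k p] that j False by simp
    also have "\<dots> = 0" using pair_prod[of y c y p p] yb y0 by simp
    finally show ?thesis using False by simp
  qed
  have "?E ?R (\<lambda>xs. (psum y xs j)\<^sup>2) = ?E ?R (\<lambda>xs. \<Sum>i<j. \<Sum>k<j. y (xs ! i) * y (xs ! k))"
    by (intro integral_cong_AE ae) auto
  also have "\<dots> = (\<Sum>i<j. \<Sum>k<j. ?E ?R (\<lambda>xs. y (xs ! i) * y (xs ! k)))"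
    using iyy by (simp add: Bochner_Integration.integral_sum Bochner_Integration.integrable_sum)
  also have "\<dots> = (\<Sum>i<j. \<Sum>k<j. (if i = k then ?E p (\<lambda>x. y x * y x) else 0))"
    using yy by simp
  also have "\<dots> = (\<Sum>i<j. ?E p (\<lambda>x. y x * y x))"
    by (simp add: sum.delta)
  also have "\<dots> \<le> (\<Sum>i<j. c\<^sup>2)"
  proof (intro sum_mono)
    fix i
    have "?E p (\<lambda>x. y x * y x) \<le> ?E p (\<lambda>x. c\<^sup>2)"
      using yy2 yy3 by (intro integral_mono measure_pmf.integrable_const_bound[where B="c*c"])
        (auto simp: power2_eq_square dest: abs_le_D1)
    then show "?E p (\<lambda>x. y x * y x) \<le> c\<^sup>2" by simp
  qed
  finally show "?E ?R (\<lambda>xs. (psum y xs j)\<^sup>2) \<le> j * c\<^sup>2" by simp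
qed

lemma real_div_le: "real (n div L) \<le> real n / real L"
proof (cases "L = 0")
  case False
  have "(n div L) * L \<le> n" by (simp add: div_times_less_eq_dividend)
  then have "real (n div L) * real L \<le> real n" by (metis of_nat_le_iff of_nat_mult)
  then show ?thesis using False by (simp add: field_simps)
qed simp

lemma runmax_int:
  fixes y :: "'a \<Rightarrow> real"
  assumes "\<And>x. \<bar>y x\<bar> \<le> c"
  shows "integrable (measure_pmf (replicate_pmf n p)) (runmax y)"
proof (rule measure_pmf.integrable_const_bound[where B="n*c"])
  show "AE x in measure_pmf (replicate_pmf n p). norm (runmax y x) \<le> real n * c"
    using AE_rep[of n p]
  proof eventually_elim
    case (elim xs)
    have "\<bar>runmax y xs\<bar> \<le> sum_list (map (\<lambda>x. \<bar>y x\<bar>) xs)" by (rule runmax_abs)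
    also have "\<dots> \<le> length xs * c" by (rule sum_list_le_len) (use assms in auto)
    finally show ?case using elim by simp
  qed
qed simp

lemma bc:
  fixes y :: "'a \<Rightarrow> real" and \<epsilon> c :: real
  assumes yb: "\<And>x. \<bar>y x\<bar> \<le> c" and y0: "measure_pmf.expectation p y = 0" and e: "\<epsilon> > 0"
  shows "\<exists>C. \<forall>n. measure_pmf.expectation (replicate_pmf n p) (runmax y) \<le> \<epsilon> * n + C"
proof -
  let ?E = "measure_pmf.expectation"
  have c: "0 \<le> c" using yb abs_ge_zero order_trans by blast
  define L where "L = nat \<lceil>c\<^sup>2 / \<epsilon>\<^sup>2\<rceil> + 1"
  have L0: "L > 0" unfolding L_def by simp
  have Lge: "c\<^sup>2 / \<epsilon>\<^sup>2 \<le> real L" unfolding L_def by linarith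
  then have "c\<^sup>2 \<le> real L * \<epsilon>\<^sup>2" using e by (simp add: field_simps)
  then have Leps: "c\<^sup>2 / (real L * \<epsilon>) \<le> \<epsilon>" using e L0 by (simp add: field_simps power2_eq_square)
  define C where "C = c * L + (c\<^sup>2 / \<epsilon> + \<epsilon>) / 2"
  have "?E (replicate_pmf n p) (runmax y) \<le> \<epsilon> * n + C" for n
  proof -
    let ?R = "replicate_pmf n p"
    define t where "t = \<epsilon> * (n + 1)"
    have t: "t > 0" unfolding t_def using e by simp
    define Q where "Q = n div L"
    define W where "W xs = (\<Sum>q\<le>Q. (psum y xs (q * L))\<^sup>2)" for xs
    have qL: "q * L \<le> n" if "q \<le> Q" for q
    proof -
      have "q * L \<le> Q * L" using that by simp
      also have "\<dots> \<le> n" unfolding Q_def by (simp add: div_times_less_eq_dividend)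
      finally show ?thesis .
    qed
    have iW: "integrable (measure_pmf ?R) W"
      unfolding W_def using sq_bound(1)[OF yb y0] qL by (intro Bochner_Integration.integrable_sum) auto
    have EW: "?E ?R W \<le> (Q + 1) * (n * c\<^sup>2)"
    proof -
      have "?E ?R W = (\<Sum>q\<le>Q. ?E ?R (\<lambda>xs. (psum y xs (q * L))\<^sup>2))"
        unfolding W_def using sq_bound(1)[OF yb y0] qL by (intro Bochner_Integration.integral_sum) auto
      also have "\<dots> \<le> (\<Sum>q\<le>Q. n * c\<^sup>2)"
      proof (intro sum_mono)
        fix q assume "q \<in> {..Q}"
        then have "q * L \<le> n" using qL by auto
        then have "real (q * L) \<le> real n" by (simp only: of_nat_le_iff)
        then have "real (q * L) * c\<^sup>2 \<le> n * c\<^sup>2" by (intro mult_right_mono) auto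
        then show "?E ?R (\<lambda>xs. (psum y xs (q * L))\<^sup>2) \<le> n * c\<^sup>2"
          using sq_bound(2)[OF yb y0 \<open>q * L \<le> n\<close>] by linarith
      qed
      also have "\<dots> = (Q + 1) * (n * c\<^sup>2)" by simp
      finally show ?thesis .
    qed
    have ae: "AE xs in measure_pmf ?R. runmax y xs \<le> c * L + (W xs / t + t) / 2"
      using AE_rep[of n p]
    proof eventually_elim
      case (elim xs)
      show ?case using runmax_block[OF yb L0 t, of xs n] elim by (simp add: W_def Q_def)
    qed
    have "?E ?R (runmax y) \<le> ?E ?R (\<lambda>xs. c * L + (W xs / t + t) / 2)"
      using ae iW runmax_int[OF yb] by (intro integral_mono_AE) auto
    also have "\<dots> = c * L + (?E ?R W / t + t) / 2"
      using iW by simp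
    also have "\<dots> \<le> c * L + ((Q + 1) * (n * c\<^sup>2) / t + t) / 2"
      using EW t by (simp add: divide_right_mono)
    also have "(Q + 1) * (n * c\<^sup>2) / t \<le> \<epsilon> * n + c\<^sup>2 / \<epsilon>"
    proof -
      have Q1: "real Q + 1 \<le> real n / real L + 1" unfolding Q_def using real_div_le by simp
      have "(Q + 1) * (n * c\<^sup>2) / t = (real Q + 1) * c\<^sup>2 / \<epsilon> * (n / (n + 1))"
        unfolding t_def using e by (simp add: field_simps)
      also have "\<dots> \<le> (real Q + 1) * c\<^sup>2 / \<epsilon>"
        using e by (intro mult_left_le) (auto simp: field_simps)
      also have "\<dots> \<le> (real n / real L + 1) * c\<^sup>2 / \<epsilon>"
        using Q1 e by (intro divide_right_mono mult_right_mono) auto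
      also have "\<dots> = real n * (c\<^sup>2 / (real L * \<epsilon>)) + c\<^sup>2 / \<epsilon>"
        using L0 e by (simp add: field_simps)
      also have "\<dots> \<le> real n * \<epsilon> + c\<^sup>2 / \<epsilon>"
        using mult_left_mono[OF Leps, of "real n"] by simp
      finally show ?thesis by (simp add: mult.commute)
    qed
    then have "c * L + ((Q + 1) * (n * c\<^sup>2) / t + t) / 2 \<le> c * L + (\<epsilon> * n + c\<^sup>2 / \<epsilon> + t) / 2"
      by (intro add_left_mono divide_right_mono add_right_mono) auto
    also have "\<dots> = \<epsilon> * n + C" unfolding C_def t_def by (simp add: field_simps)
    finally show ?thesis .
  qed
  then show ?thesis by blast
qed

lemma tail:
  fixes f :: "'a \<Rightarrow> real"
  assumes f: "integrable (measure_pmf p) f" and eta: "\<eta> > 0"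
  shows "\<exists>K\<ge>0. measure_pmf.expectation p (\<lambda>x. max 0 (\<bar>f x\<bar> - K)) < \<eta>"
proof -
  define s where "s i x = max 0 (\<bar>f x\<bar> - real i)" for i x
  have "(\<lambda>i. measure_pmf.expectation p (s i)) \<longlonglongrightarrow> measure_pmf.expectation p (\<lambda>x. 0::real)"
  proof (rule integral_dominated_convergence[where w="\<lambda>x. \<bar>f x\<bar>"])
    show "integrable (measure_pmf p) (\<lambda>x. \<bar>f x\<bar>)" using f by simp
    show "AE x in measure_pmf p. (\<lambda>i. s i x) \<longlonglongrightarrow> 0"
    proof (rule AE_I2)
      fix x
      have "eventually (\<lambda>i. s i x = 0) sequentially"
        unfolding eventually_sequentially s_def
      proof (rule exI[of _ "nat \<lceil>\<bar>f x\<bar>\<rceil>"], intro allI impI)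
        fix i assume "nat \<lceil>\<bar>f x\<bar>\<rceil> \<le> i"
        then have "real (nat \<lceil>\<bar>f x\<bar>\<rceil>) \<le> real i" by (simp only: of_nat_le_iff)
        then have "\<bar>f x\<bar> \<le> real i" using real_nat_ceiling_ge[of "\<bar>f x\<bar>"] by linarith
        then show "max 0 (\<bar>f x\<bar> - real i) = 0" by simp
      qed
      then show "(\<lambda>i. s i x) \<longlonglongrightarrow> 0" by (rule tendsto_eventually)
    qed
    show "AE x in measure_pmf p. norm (s i x) \<le> \<bar>f x\<bar>" for i
      by (rule AE_I2) (auto simp: s_def)
  qed auto
  then have "(\<lambda>i. measure_pmf.expectation p (s i)) \<longlonglongrightarrow> 0" by simp
  then obtain N where "\<forall>i\<ge>N. measure_pmf.expectation p (s i) < \<eta>"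
    using eta order_tendstoD(2) eventually_sequentially by metis
  then have "measure_pmf.expectation p (s N) < \<eta>" by simp
  then have "measure_pmf.expectation p (\<lambda>x. max 0 (\<bar>f x\<bar> - real N)) < \<eta>"
    by (simp add: s_def[abs_def])
  then show ?thesis by (intro exI[of _ "real N"]) auto
qed

lemma runmax_int2:
  fixes f :: "'a \<Rightarrow> real"
  assumes f: "integrable (measure_pmf p) f"
  shows "integrable (measure_pmf (replicate_pmf n p)) (runmax f)"
proof (rule Bochner_Integration.integrable_bound[OF int_sum(1)[of p "\<lambda>x. \<bar>f x\<bar>" n]])
  show "integrable (measure_pmf p) (\<lambda>x. \<bar>f x\<bar>)" using f by simp
  show "AE xs in measure_pmf (replicate_pmf n p). norm (runmax f xs) \<le> norm (sum_list (map (\<lambda>x. \<bar>f x\<bar>) xs))"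
    by (intro AE_I2) (simp only: real_norm_def, rule order_trans[OF runmax_abs abs_ge_self])
qed simp

lemma mlmax_int:
  fixes f :: "'a \<Rightarrow> real"
  assumes f: "integrable (measure_pmf p) f"
  shows "integrable (measure_pmf (replicate_pmf n p)) (mlmax f)"
proof (rule Bochner_Integration.integrable_bound[OF int_sum(1)[of p "\<lambda>x. \<bar>f x\<bar>" n]])
  show "integrable (measure_pmf p) (\<lambda>x. \<bar>f x\<bar>)" using f by simp
  show "AE xs in measure_pmf (replicate_pmf n p). norm (mlmax f xs) \<le> norm (sum_list (map (\<lambda>x. \<bar>f x\<bar>) xs))"
    by (intro AE_I2) (simp only: real_norm_def, rule order_trans[OF mlmax_abs abs_ge_self])
qed simp

lemma sum_list_const: "sum_list (map (\<lambda>_. a) xs) = length xs * (a::real)"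
  by (induction xs) (auto simp: algebra_simps)

lemma llnmax:
  fixes f :: "'a \<Rightarrow> real" and \<epsilon> :: real
  assumes f: "integrable (measure_pmf p) f" and e: "\<epsilon> > 0"
  shows "\<exists>C. \<forall>n. measure_pmf.expectation (replicate_pmf n p) (runmax f)
            \<le> n * (max (measure_pmf.expectation p f) 0 + \<epsilon>) + C"
proof -
  let ?E = "measure_pmf.expectation"
  define \<eta> where "\<eta> = \<epsilon> / 3"
  have eta: "\<eta> > 0" using e by (simp add: \<eta>_def)
  obtain K where K: "K \<ge> 0" "?E p (\<lambda>x. max 0 (\<bar>f x\<bar> - K)) < \<eta>" using tail[OF f eta] by blast
  define \<tau> where "\<tau> = (\<lambda>x. max 0 (\<bar>f x\<bar> - K))"
  define g where "g x = max (-K) (min K (f x))" for x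
  define mg where "mg = ?E p g"
  define y where "y x = g x - mg" for x
  have gb: "\<bar>g x\<bar> \<le> K" for x using K(1) by (auto simp: g_def)
  have ig: "integrable (measure_pmf p) g" using gb by (intro measure_pmf.integrable_const_bound[where B=K]) auto
  have itau: "integrable (measure_pmf p) \<tau>" unfolding \<tau>_def using f by (intro integrable_max) auto
  have mgb: "\<bar>mg\<bar> \<le> K"
  proof -
    have "\<bar>mg\<bar> \<le> ?E p (\<lambda>x. \<bar>g x\<bar>)" unfolding mg_def by (rule integral_abs_bound)
    also have "\<dots> \<le> ?E p (\<lambda>x. K)" using gb ig by (intro integral_mono) auto
    finally show ?thesis by simp
  qed
  have yb: "\<bar>y x\<bar> \<le> 2 * K" for x using gb[of x] mgb by (auto simp: y_def)
  have y0: "?E p y = 0" unfolding y_def mg_def using ig by simp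
  have fg: "f x \<le> g x + \<tau> x" for x by (auto simp: g_def \<tau>_def)
  have gf: "g x \<le> f x + \<tau> x" for x by (auto simp: g_def \<tau>_def)
  have mgm: "mg \<le> ?E p f + \<eta>"
  proof -
    have "mg \<le> ?E p (\<lambda>x. f x + \<tau> x)" unfolding mg_def using ig f itau gf by (intro integral_mono) auto
    also have "\<dots> = ?E p f + ?E p \<tau>" using f itau by simp
    finally show ?thesis using K(2) by (simp add: \<tau>_def)
  qed
  obtain C0 where C0: "\<And>n. ?E (replicate_pmf n p) (runmax y) \<le> \<eta> * n + C0"
    using bc[OF yb y0 eta] by blast
  have "?E (replicate_pmf n p) (runmax f) \<le> n * (max (?E p f) 0 + \<epsilon>) + C0" for n
  proof -
    let ?R = "replicate_pmf n p"
    have iy: "integrable (measure_pmf ?R) (runmax y)" by (rule runmax_int[OF yb])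
    have its: "integrable (measure_pmf ?R) (\<lambda>xs. sum_list (map \<tau> xs))" by (rule int_sum(1)[OF itau])
    have ae: "AE xs in measure_pmf ?R. runmax f xs \<le> runmax y xs + n * max mg 0 + sum_list (map \<tau> xs)"
      using AE_rep[of n p]
    proof eventually_elim
      case (elim xs)
      have "runmax f xs \<le> runmax g xs + sum_list (map \<tau> xs)"
        by (rule runmax_mono_add) (use fg in \<open>auto simp: \<tau>_def\<close>)
      moreover have "runmax g xs \<le> runmax y xs + sum_list (map (\<lambda>_. max mg 0) xs)"
        by (rule runmax_mono_add) (auto simp: y_def)
      ultimately show ?case using elim by (simp add: sum_list_const)
    qed
    have "?E ?R (runmax f) \<le> ?E ?R (\<lambda>xs. runmax y xs + n * max mg 0 + sum_list (map \<tau> xs))"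
      using ae iy its runmax_int2[OF f] by (intro integral_mono_AE) auto
    also have "\<dots> = ?E ?R (runmax y) + n * max mg 0 + n * ?E p \<tau>"
      using iy its int_sum(2)[OF itau] by simp
    also have "\<dots> \<le> \<eta> * n + C0 + n * (max (?E p f) 0 + \<eta>) + n * \<eta>"
    proof -
      have "max mg 0 \<le> max (?E p f) 0 + \<eta>" using mgm eta by auto
      then have a: "n * max mg 0 \<le> n * (max (?E p f) 0 + \<eta>)" by (intro mult_left_mono) auto
      have "?E p \<tau> \<le> \<eta>" using K(2) by (simp add: \<tau>_def)
      then have b: "n * ?E p \<tau> \<le> n * \<eta>" by (intro mult_left_mono) auto
      show ?thesis using a b C0[of n] by linarith
    qed
    also have "\<dots> = n * (max (?E p f) 0 + \<epsilon>) + C0" unfolding \<eta>_def by (simp add: algebra_simps)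
    finally show ?thesis .
  qed
  then show ?thesis by blast
qed

lemma mlmax_bound:
  fixes f :: "'a \<Rightarrow> real" and \<epsilon> :: real
  assumes f: "integrable (measure_pmf p) f" and e: "\<epsilon> > 0"
  shows "\<exists>C. \<forall>n. measure_pmf.expectation (replicate_pmf n p) (mlmax f) \<le> n * \<epsilon> + C"
proof -
  let ?E = "measure_pmf.expectation"
  obtain K where K: "K \<ge> 0" "?E p (\<lambda>x. max 0 (\<bar>f x\<bar> - K)) < \<epsilon>" using tail[OF f e] by blast
  define \<tau> where "\<tau> = (\<lambda>x. max 0 (\<bar>f x\<bar> - K))"
  have itau: "integrable (measure_pmf p) \<tau>" unfolding \<tau>_def using f by (intro integrable_max) auto
  have "?E (replicate_pmf n p) (mlmax f) \<le> n * \<epsilon> + K" for n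
  proof -
    let ?R = "replicate_pmf n p"
    have "?E ?R (mlmax f) \<le> ?E ?R (\<lambda>xs. K + sum_list (map \<tau> xs))"
    proof (intro integral_mono mlmax_int[OF f])
      show "integrable (measure_pmf ?R) (\<lambda>xs. K + sum_list (map \<tau> xs))"
        using int_sum(1)[OF itau] by simp
      fix xs
      have "mlmax f xs \<le> K + sum_list (map (\<lambda>x. max 0 (f x - K)) xs)" by (rule mlmax_le[OF K(1)])
      also have "\<dots> \<le> K + sum_list (map \<tau> xs)"
        by (intro add_left_mono sum_list_mono) (auto simp: \<tau>_def)
      finally show "mlmax f xs \<le> K + sum_list (map \<tau> xs)" .
    qed
    also have "\<dots> = K + n * ?E p \<tau>" using int_sum[OF itau] by simp
    also have "\<dots> \<le> K + n * \<epsilon>" using K(2) by (intro add_left_mono mult_left_mono) (auto simp: \<tau>_def)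
    finally show ?thesis by simp
  qed
  then show ?thesis by blast
qed

lemma av_basic:
  assumes v: "abs_value v"
  shows "v 1 = 1" "\<And>x. v (- x) = v x" "\<And>x. x \<noteq> 0 \<Longrightarrow> v (inverse x) = inverse (v x)"
    "\<And>x. x \<noteq> 0 \<Longrightarrow> v x > 0" "v 0 = 0" "\<And>x y. v (x * y) = v x * v y" "\<And>x y. v (x + y) \<le> v x + v y"
    "\<And>x. 0 \<le> v x"
proof -
  have nn: "\<And>x. 0 \<le> v x" and z: "\<And>x. v x = 0 \<longleftrightarrow> x = 0" and m: "\<And>x y. v (x * y) = v x * v y"
    and t: "\<And>x y. v (x + y) \<le> v x + v y"
    using v unfolding abs_value_def by auto
  show "\<And>x y. v (x * y) = v x * v y" "\<And>x y. v (x + y) \<le> v x + v y" "\<And>x. 0 \<le> v x" by (fact m t nn)+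
  show v0: "v 0 = 0" using z by simp
  show pos: "\<And>x. x \<noteq> 0 \<Longrightarrow> v x > 0" using nn z by (metis less_eq_real_def)
  have "v 1 = v 1 * v 1" using m[of 1 1] by simp
  moreover have "v 1 \<noteq> 0" using z by simp
  ultimately show v1: "v 1 = 1" by (metis mult_cancel_left1)
  have "v (-1) * v (-1) = 1" using m[of "-1" "-1"] v1 by simp
  then have "v (-1) = 1" using nn[of "-1"]
    by (metis abs_of_nonneg mult_cancel_right1 real_sqrt_abs2 real_sqrt_one)
  then show "\<And>x. v (- x) = v x" using m by (metis mult_minus1 mult_1)
  show "\<And>x. x \<noteq> 0 \<Longrightarrow> v (inverse x) = inverse (v x)"
  proof -
    fix x :: 'a assume "x \<noteq> 0"
    then have "v x * v (inverse x) = 1" using m[of x "inverse x"] v1 by simp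
    moreover have "v x \<noteq> 0" using \<open>x \<noteq> 0\<close> z by simp
    ultimately show "v (inverse x) = inverse (v x)" by (metis inverse_unique mult.commute)
  qed
qed

lemma opnorm_bounds:
  assumes v: "abs_value v"
  shows "max (v a) (v c) \<le> opnorm v (a, b, c, d)" "max (v b) (v d) \<le> opnorm v (a, b, c, d)"
    "opnorm v (a, b, c, d) \<le> 2 * max (max (v a) (v b)) (max (v c) (v d))"
proof -
  note av = av_basic[OF v]
  define M where "M = max (max (v a) (v b)) (max (v c) (v d))"
  define S where "S = {maxnorm v (mapply (a, b, c, d) x) / maxnorm v x | x. x \<noteq> (0, 0)}"
  have opS: "opnorm v (a, b, c, d) = Sup S" unfolding opnorm_def S_def by (rule refl)
  have bound: "r \<le> 2 * M" if "r \<in> S" for r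
  proof -
    have "\<exists>xx. r = maxnorm v (mapply (a, b, c, d) xx) / maxnorm v xx \<and> xx \<noteq> (0, 0)"
      using that unfolding S_def by (simp only: mem_Collect_eq)
    then obtain xx where xx: "xx \<noteq> (0, 0)" "r = maxnorm v (mapply (a, b, c, d) xx) / maxnorm v xx"
      by (elim exE conjE) simp
    obtain x1 x2 where "xx = (x1, x2)" by (cases xx)
    then have x: "(x1, x2) \<noteq> (0, 0)" "r = maxnorm v (mapply (a, b, c, d) (x1, x2)) / maxnorm v (x1, x2)"
      using xx by auto
    define m where "m = max (v x1) (v x2)"
    have mpos: "m > 0"
    proof (cases "x1 = 0")
      case True
      then have "x2 \<noteq> 0" using x(1) by simp
      then have "v x2 > 0" by (rule av(4))
      then show ?thesis unfolding m_def by simp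
    next
      case False
      then have "v x1 > 0" by (rule av(4))
      then show ?thesis unfolding m_def by simp
    qed
    have M0: "0 \<le> M" using av(8) unfolding M_def by (auto simp: le_max_iff_disj)
    have "v (a * x1 + b * x2) \<le> v (a * x1) + v (b * x2)" by (rule av(7))
    also have "\<dots> = v a * v x1 + v b * v x2" by (simp only: av(6))
    also have "\<dots> \<le> M * m + M * m" unfolding M_def m_def
      by (intro add_mono mult_mono) (auto simp: av(8) M0[unfolded M_def])
    finally have 1: "v (a * x1 + b * x2) \<le> 2 * M * m" by simp
    have "v (c * x1 + d * x2) \<le> v (c * x1) + v (d * x2)" by (rule av(7))
    also have "\<dots> = v c * v x1 + v d * v x2" by (simp only: av(6))
    also have "\<dots> \<le> M * m + M * m" unfolding M_def m_def
      by (intro add_mono mult_mono) (auto simp: av(8) M0[unfolded M_def])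
    finally have 2: "v (c * x1 + d * x2) \<le> 2 * M * m" by simp
    have "r = max (v (a * x1 + b * x2)) (v (c * x1 + d * x2)) / m" using x(2) by (simp add: m_def)
    also have "\<dots> \<le> (2 * M * m) / m" using 1 2 mpos by (intro divide_right_mono) auto
    also have "\<dots> = 2 * M" using mpos by simp
    finally show ?thesis .
  qed
  have bdd: "bdd_above S" using bound by (auto simp: bdd_above_def)
  have e1: "max (v a) (v c) \<in> S" unfolding S_def
    by (rule CollectI, rule exI[of _ "(1, 0)"]) (simp add: av(1) av(5))
  have e2: "max (v b) (v d) \<in> S" unfolding S_def
    by (rule CollectI, rule exI[of _ "(0, 1)"]) (simp add: av(1) av(5))
  show "max (v a) (v c) \<le> opnorm v (a, b, c, d)" unfolding opS by (rule cSup_upper[OF e1 bdd])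
  show "max (v b) (v d) \<le> opnorm v (a, b, c, d)" unfolding opS by (rule cSup_upper[OF e2 bdd])
  show "opnorm v (a, b, c, d) \<le> 2 * max (max (v a) (v b)) (max (v c) (v d))"
    unfolding opS M_def[symmetric] using e1 bound by (intro cSup_least) auto
qed

definition prodm :: "'k::field mat2 list \<Rightarrow> 'k mat2" where "prodm xs = foldl mmult mone xs"
definition ut :: "'k::field mat2 \<Rightarrow> bool" where "ut g \<longleftrightarrow> mdet g = 1 \<and> entry21 g = 0"
fun entry12 :: "'k::field mat2 \<Rightarrow> 'k" where "entry12 (a, b, c, d) = b"
definition Xf :: "('k::field \<Rightarrow> real) \<Rightarrow> 'k mat2 \<Rightarrow> real" where "Xf v g = ln (v (entry11 g))"
definition Lf :: "('k::field \<Rightarrow> real) \<Rightarrow> 'k mat2 \<Rightarrow> real" where "Lf v g = ln (opnorm v g)"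

lemma prodm_snoc: "prodm (xs @ [x]) = mmult (prodm xs) x"
  by (simp add: prodm_def)

lemma prodm_Nil: "prodm [] = (1, 0, 0, 1)"
  by (simp add: prodm_def mone_def)

lemma ut_form: "ut g \<Longrightarrow> \<exists>a b d. g = (a, b, 0, d) \<and> a * d = 1"
  unfolding ut_def by (cases g) auto

lemma ut_mult: assumes "ut g" "ut h" shows "ut (mmult g h)"
proof -
  obtain a b d where g: "g = (a, b, 0, d)" "a * d = 1" using ut_form[OF assms(1)] by blast
  obtain a' b' d' where h: "h = (a', b', 0, d')" "a' * d' = 1" using ut_form[OF assms(2)] by blast
  have "a * a' * (d * d') = (a * d) * (a' * d')" by (simp add: algebra_simps)
  then show ?thesis using g h by (simp add: ut_def)
qed

lemma ut_prodm: "(\<And>g. g \<in> set xs \<Longrightarrow> ut g) \<Longrightarrow> ut (prodm xs)"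
proof (induction xs rule: rev_induct)
  case Nil then show ?case by (simp add: prodm_Nil ut_def)
next
  case (snoc x xs) then show ?case by (simp add: prodm_snoc ut_mult)
qed

lemma ut_single:
  assumes v: "abs_value v" and g: "ut g"
  shows "0 < v (entry11 g)" "\<bar>Xf v g\<bar> \<le> Lf v g" "0 \<le> Lf v g" "v (entry12 g) \<le> exp (Lf v g)"
    "1 \<le> opnorm v g"
proof -
  note av = av_basic[OF v]
  obtain a b d where gg: "g = (a, b, 0, d)" "a * d = 1" using ut_form[OF g] by blast
  have a0: "a \<noteq> 0" using gg(2) by auto
  have d: "d = inverse a" using gg(2) by (metis inverse_unique)
  have va: "v a > 0" using av(4)[OF a0] .
  have vd: "v d = inverse (v a)" using av(3)[OF a0] d by simp
  have o1: "v a \<le> opnorm v g" using opnorm_bounds(1)[OF v, where a=a and b=b and c=0 and d=d] gg by simp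
  have o2: "v b \<le> opnorm v g" "v d \<le> opnorm v g" using opnorm_bounds(2)[OF v, where a=a and b=b and c=0 and d=d] gg by auto
  show "0 < v (entry11 g)" using va gg by simp
  have one: "1 \<le> max (v a) (inverse (v a))"
  proof (cases "v a \<le> 1")
    case True then have "1 \<le> inverse (v a)" using va by (simp add: one_le_inverse)
    then show ?thesis by simp
  qed simp
  show op1: "1 \<le> opnorm v g" using one o1 o2 vd by simp
  then have op0: "0 < opnorm v g" by simp
  show "0 \<le> Lf v g" unfolding Lf_def using op1 by simp
  have "ln (v a) \<le> ln (opnorm v g)" using o1 va by simp
  moreover have "- ln (v a) \<le> ln (opnorm v g)"
  proof -
    have "- ln (v a) = ln (inverse (v a))" using va by (simp add: ln_inverse)
    also have "\<dots> \<le> ln (opnorm v g)" using o2(2) vd va by (intro ln_mono) auto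
    finally show ?thesis .
  qed
  ultimately show "\<bar>Xf v g\<bar> \<le> Lf v g" unfolding Xf_def Lf_def using gg by simp
  show "v (entry12 g) \<le> exp (Lf v g)" unfolding Lf_def using op0 o2 gg by simp
qed

lemma det_bound:
  assumes v: "abs_value v" and u: "\<And>g. g \<in> set xs \<Longrightarrow> ut g"
  shows "v (entry11 (prodm xs)) = exp (sum_list (map (Xf v) xs)) \<and>
    v (entry12 (prodm xs)) \<le> length xs * exp (mlmax (Lf v) xs + runmax (Xf v) xs + runmax (\<lambda>g. - Xf v g) (rev xs))"
  using u
proof (induction xs rule: rev_induct)
  case Nil then show ?case by (simp add: prodm_Nil av_basic[OF v])
next
  case (snoc x xs)
  note av = av_basic[OF v]
  let ?X = "Xf v" and ?L = "Lf v"
  have ux: "ut x" using snoc.prems by simp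
  have uP: "ut (prodm xs)" using snoc.prems by (intro ut_prodm) auto
  obtain a b d where xx: "x = (a, b, 0, d)" "a * d = 1" using ut_form[OF ux] by blast
  obtain A B D where PP: "prodm xs = (A, B, 0, D)" "A * D = 1" using ut_form[OF uP] by blast
  have a0: "a \<noteq> 0" using xx(2) by auto
  have va: "v a > 0" using av(4)[OF a0] .
  have vd: "v d = exp (- ?X x)"
  proof -
    have "d = inverse a" using xx(2) by (metis inverse_unique)
    then have "v d = inverse (v a)" using av(3)[OF a0] by simp
    also have "\<dots> = exp (- ?X x)" using va xx by (simp add: Xf_def exp_minus)
    finally show ?thesis .
  qed
  have vb: "v b \<le> exp (?L x)" using ut_single(4)[OF v ux] xx by simp
  have IH: "v A = exp (sum_list (map ?X xs))"
    "v B \<le> length xs * exp (mlmax ?L xs + runmax ?X xs + runmax (\<lambda>g. - ?X g) (rev xs))"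
    using snoc.IH snoc.prems PP by auto
  have prod: "prodm (xs @ [x]) = (A * a, A * b + B * d, 0, D * d)"
    by (simp add: prodm_snoc PP xx)
  define S where "S = sum_list (map ?X xs)"
  define M where "M = mlmax ?L xs"
  define R1 where "R1 = runmax ?X xs"
  define R2 where "R2 = runmax (\<lambda>g. - ?X g) (rev xs)"
  define M' where "M' = mlmax ?L (xs @ [x])"
  define R1' where "R1' = runmax ?X (xs @ [x])"
  define R2' where "R2' = runmax (\<lambda>g. - ?X g) (rev (xs @ [x]))"
  have hM: "M \<le> M'" "?L x \<le> M'" unfolding M_def M'_def by (auto simp: mlmax_append)
  have hR1: "R1 \<le> R1'" "S \<le> R1'"
    unfolding R1_def R1'_def S_def using runmax_append1 runmax_append2[of ?X xs "[x]"] runmax_nonneg[of ?X "[x]"]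
    by auto
  have hR2: "0 \<le> R2'" "R2 - ?X x \<le> R2'" unfolding R2_def R2'_def by auto
  have e11: "v (entry11 (prodm (xs @ [x]))) = exp (sum_list (map ?X (xs @ [x])))"
  proof -
    have "v (entry11 (prodm (xs @ [x]))) = v A * v a" using prod av(6) by simp
    also have "\<dots> = exp (sum_list (map ?X xs)) * exp (?X x)" using IH(1) va xx by (simp add: Xf_def)
    also have "\<dots> = exp (sum_list (map ?X (xs @ [x])))" by (simp add: exp_add)
    finally show ?thesis .
  qed
  have "v (entry12 (prodm (xs @ [x]))) \<le> v (A * b) + v (B * d)" using prod av(7) by simp
  also have "\<dots> = v A * v b + v B * v d" using av(6) by simp
  also have "\<dots> \<le> exp S * exp (?L x) + (length xs * exp (M + R1 + R2)) * exp (- ?X x)"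
    unfolding S_def M_def R1_def R2_def using IH vb vd av(8)
    by (intro add_mono mult_mono) auto
  also have "\<dots> = exp (S + ?L x) + length xs * exp (M + R1 + (R2 - ?X x))"
    by (simp add: exp_add[symmetric] algebra_simps)
  also have "\<dots> \<le> exp (M' + R1' + R2') + length xs * exp (M' + R1' + R2')"
    using hM hR1 hR2 by (intro add_mono mult_left_mono) auto
  also have "\<dots> = length (xs @ [x]) * exp (M' + R1' + R2')" by (simp add: algebra_simps)
  finally show ?case using e11 unfolding M'_def R1'_def R2'_def by simp
qed

lemma det_final:
  assumes v: "abs_value v" and u: "\<And>g. g \<in> set xs \<Longrightarrow> ut g"
  shows "\<bar>sum_list (map (Xf v) xs)\<bar> \<le> Lf v (prodm xs)"
    "Lf v (prodm xs) \<le> ln 2 + ln (real (length xs) + 1) + mlmax (Lf v) xs + runmax (Xf v) xs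
       + runmax (\<lambda>g. - Xf v g) (rev xs)"
proof -
  note av = av_basic[OF v]
  let ?X = "Xf v" and ?L = "Lf v"
  define S where "S = sum_list (map ?X xs)"
  define M where "M = mlmax ?L xs"
  define R1 where "R1 = runmax ?X xs"
  define R2 where "R2 = runmax (\<lambda>g. - ?X g) (rev xs)"
  define n where "n = length xs"
  have uP: "ut (prodm xs)" using u by (rule ut_prodm)
  obtain A B D where PP: "prodm xs = (A, B, 0, D)" "A * D = 1" using ut_form[OF uP] by blast
  have db0: "v (entry11 (prodm xs)) = exp (sum_list (map (Xf v) xs)) \<and>
    v (entry12 (prodm xs)) \<le> length xs * exp (mlmax (Lf v) xs + runmax (Xf v) xs + runmax (\<lambda>g. - Xf v g) (rev xs))"
    by (rule det_bound[OF v]) (rule u)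
  have db: "v A = exp S" "v B \<le> n * exp (M + R1 + R2)"
    using db0 PP unfolding S_def M_def R1_def R2_def n_def by auto
  have "Xf v (prodm xs) = S" using db(1) PP by (simp add: Xf_def)
  then show "\<bar>sum_list (map (Xf v) xs)\<bar> \<le> Lf v (prodm xs)"
    using ut_single(2)[OF v uP] unfolding S_def by simp
  have M0: "0 \<le> M" unfolding M_def by (rule mlmax_nonneg)
  have R10: "0 \<le> R1" unfolding R1_def by (rule runmax_nonneg)
  have R20: "0 \<le> R2" unfolding R2_def by (rule runmax_nonneg)
  have SR1: "S \<le> R1" unfolding S_def R1_def by (rule runmax_ge_sum)
  have SR2: "- S \<le> R2"
  proof -
    have neg: "sum_list (map (\<lambda>g. - ?X g) ys) = - sum_list (map ?X ys)" for ys
      by (induction ys) auto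
    have "- S = sum_list (map (\<lambda>g. - ?X g) (rev xs))"
      unfolding S_def neg by (simp add: rev_map[symmetric] sum_list_rev)
    also have "\<dots> \<le> R2" unfolding R2_def by (rule runmax_ge_sum)
    finally show ?thesis .
  qed
  define E where "E = exp (M + R1 + R2)"
  have E0: "0 < E" unfolding E_def by simp
  have A0: "A \<noteq> 0" using PP(2) by auto
  have vA: "v A \<le> E" unfolding E_def db(1) using SR1 M0 R20 by simp
  have vD: "v D \<le> E"
  proof -
    have "D = inverse A" using PP(2) by (metis inverse_unique)
    then have "v D = inverse (v A)" using av(3)[OF A0] by simp
    also have "\<dots> = exp (- S)" using db(1) by (simp add: exp_minus)
    also have "\<dots> \<le> E" unfolding E_def using SR2 M0 R10 by simp
    finally show ?thesis .
  qed
  have vB: "v B \<le> n * E" using db(2) unfolding E_def .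
  have mx: "max (max (v A) (v B)) (max (v 0) (v D)) \<le> (n + 1) * E"
  proof -
    have h: "0 \<le> E * real n" using E0 by simp
    have vB': "v B \<le> E * real n" using vB by (simp add: mult.commute)
    have "max (max (v A) (v B)) (max (v 0) (v D)) \<le> E + E * real n"
      using vA vB' vD E0 av(5) h by (intro max.boundedI) linarith+
    then show ?thesis by (simp add: algebra_simps)
  qed
  have op: "opnorm v (prodm xs) \<le> 2 * ((n + 1) * E)"
  proof -
    have "opnorm v (prodm xs) \<le> 2 * max (max (v A) (v B)) (max (v 0) (v D))"
      using opnorm_bounds(3)[OF v, where a=A and b=B and c=0 and d=D] PP by simp
    also have "\<dots> \<le> 2 * ((n + 1) * E)" using mx by (intro mult_left_mono) auto
    finally show ?thesis .
  qed
  have op1: "1 \<le> opnorm v (prodm xs)" by (rule ut_single(5)[OF v uP])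
  have "Lf v (prodm xs) \<le> ln (2 * ((n + 1) * E))"
    unfolding Lf_def using op op1 by (intro ln_mono) auto
  also have "\<dots> = ln 2 + ln (n + 1) + (M + R1 + R2)"
    using E0 by (simp add: ln_mult E_def)
  finally show "Lf v (prodm xs) \<le> ln 2 + ln (real (length xs) + 1) + mlmax (Lf v) xs + runmax (Xf v) xs
       + runmax (\<lambda>g. - Xf v g) (rev xs)"
    unfolding n_def M_def R1_def R2_def by (simp add: add.commute add.left_commute add.assoc)
qed

lemma conv_pow_eq: "conv_pow \<mu> n = map_pmf prodm (replicate_pmf n \<mu>)"
proof (induction n)
  case 0 then show ?case by (simp add: prodm_def)
next
  case (Suc n)
  have "map_pmf prodm (replicate_pmf (Suc n) \<mu>)
      = bind_pmf (replicate_pmf n \<mu>) (\<lambda>xs. map_pmf (\<lambda>x. prodm (xs @ [x])) \<mu>)"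
    unfolding rep_snoc by (simp add: map_bind_pmf pmf.map_comp o_def)
  also have "\<dots> = bind_pmf (replicate_pmf n \<mu>) (\<lambda>xs. map_pmf (\<lambda>h. mmult (prodm xs) h) \<mu>)"
    by (simp add: prodm_snoc)
  also have "\<dots> = conv_pow \<mu> (Suc n)"
    using Suc by (simp add: bind_map_pmf)
  finally show ?case by simp
qed

lemma rev_int:
  fixes f :: "'a list \<Rightarrow> real"
  assumes "integrable (measure_pmf (replicate_pmf n p)) f"
  shows "integrable (measure_pmf (replicate_pmf n p)) (\<lambda>xs. f (rev xs))"
    "measure_pmf.expectation (replicate_pmf n p) (\<lambda>xs. f (rev xs)) = measure_pmf.expectation (replicate_pmf n p) f"
proof -
  show "integrable (measure_pmf (replicate_pmf n p)) (\<lambda>xs. f (rev xs))"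
    using assms integrable_map_pmf_eq[of rev "replicate_pmf n p" f] rep_rev[of n p] by simp
  show "measure_pmf.expectation (replicate_pmf n p) (\<lambda>xs. f (rev xs)) = measure_pmf.expectation (replicate_pmf n p) f"
    using integral_map_pmf[of rev "replicate_pmf n p" f] rep_rev[of n p] by simp
qed

lemma small_eventually:
  fixes K \<epsilon> :: real
  assumes "\<epsilon> > 0"
  shows "eventually (\<lambda>n. K / real n + ln (real n) / real n < \<epsilon>) sequentially"
proof -
  have a: "(\<lambda>n. K / real n) \<longlonglongrightarrow> 0" by (rule lim_const_over_n)
  have b: "(\<lambda>n. ln (real n) / real n) \<longlonglongrightarrow> 0"
    using filterlim_compose[OF ln_x_over_x_tendsto_0 filterlim_real_sequentially] by (simp add: o_def)
  have "(\<lambda>n. K / real n + ln (real n) / real n) \<longlonglongrightarrow> 0" using tendsto_add[OF a b] by simp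
  then show ?thesis using assms order_tendstoD(2) by blast
qed

theorem proposition5p2:
  fixes v :: "'k::field \<Rightarrow> real" and \<mu> :: "'k mat2 pmf" and \<delta> :: real
  assumes "abs_value v" and "complete_wrt v"
    and upper: "\<forall>\<gamma>\<in>set_pmf \<mu>. mdet \<gamma> = 1 \<and> entry21 \<gamma> = 0"
    and "\<delta> > 0"
    and moment: "(\<integral>\<^sup>+ \<gamma>. ennreal ((ln (opnorm v \<gamma>)) powr (1 + \<delta>)) \<partial>measure_pmf \<mu>) < \<infinity>"
  shows "((\<lambda>n. measure_pmf.expectation (conv_pow \<mu> n) (\<lambda>\<gamma>. ln (opnorm v \<gamma>)) / real n)
           \<longlonglongrightarrow> \<bar>measure_pmf.expectation \<mu> (\<lambda>\<gamma>. ln (v (entry11 \<gamma>)))\<bar>)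
         \<and> \<bar>measure_pmf.expectation \<mu> (\<lambda>\<gamma>. ln (v (entry11 \<gamma>)))\<bar>
           = \<bar>measure_pmf.expectation \<mu> (\<lambda>\<gamma>. ln (v ((entry11 \<gamma>)\<^sup>2)))\<bar> / 2
         \<and> (map_pmf minv_sl2 \<mu> = \<mu> \<longrightarrow>
           (\<lambda>n. measure_pmf.expectation (conv_pow \<mu> n) (\<lambda>\<gamma>. ln (opnorm v \<gamma>)) / real n) \<longlonglongrightarrow> 0)"
proof -
  let ?E = "measure_pmf.expectation"
  have v: "abs_value v" by (fact assms(1))
  have ut: "\<And>g. g \<in> set_pmf \<mu> \<Longrightarrow> ut g" using upper by (auto simp: ut_def)
  note av = av_basic[OF v]
  have Lnn: "\<And>g. g \<in> set_pmf \<mu> \<Longrightarrow> 0 \<le> Lf v g" using ut_single(3)[OF v] ut by blast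
  have pw: "x \<le> 1 + x powr (1 + \<delta>)" if "0 \<le> x" for x :: real
  proof (cases "x \<le> 1")
    case True then show ?thesis by (smt (verit) powr_ge_zero)
  next
    case False
    then have "x powr 1 \<le> x powr (1 + \<delta>)" using \<open>\<delta> > 0\<close> by (intro powr_mono) auto
    then show ?thesis using False by simp
  qed
  have iL: "integrable (measure_pmf \<mu>) (Lf v)"
  proof -
    have "(\<integral>\<^sup>+g. ennreal (norm (Lf v g)) \<partial>measure_pmf \<mu>)
        \<le> (\<integral>\<^sup>+g. (1 + ennreal ((ln (opnorm v g)) powr (1 + \<delta>))) \<partial>measure_pmf \<mu>)"
    proof (intro nn_integral_mono_AE AE_pmfI)
      fix g assume g: "g \<in> set_pmf \<mu>"
      have "norm (Lf v g) \<le> 1 + (ln (opnorm v g)) powr (1 + \<delta>)"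
        using Lnn[OF g] pw[of "Lf v g"] by (simp add: Lf_def)
      then have "ennreal (norm (Lf v g)) \<le> ennreal (1 + (ln (opnorm v g)) powr (1 + \<delta>))"
        by (rule ennreal_leI)
      also have "\<dots> = 1 + ennreal ((ln (opnorm v g)) powr (1 + \<delta>))"
        by (simp add: ennreal_plus)
      finally show "ennreal (norm (Lf v g)) \<le> 1 + ennreal ((ln (opnorm v g)) powr (1 + \<delta>))" .
    qed
    also have "\<dots> = (\<integral>\<^sup>+g. 1 \<partial>measure_pmf \<mu>) + (\<integral>\<^sup>+g. ennreal ((ln (opnorm v g)) powr (1 + \<delta>)) \<partial>measure_pmf \<mu>)"
      by (rule nn_integral_add) auto
    also have "\<dots> < \<infinity>" using moment by simp
    finally show ?thesis by (simp add: integrable_iff_bounded)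
  qed
  have iX: "integrable (measure_pmf \<mu>) (Xf v)"
  proof (rule Bochner_Integration.integrable_bound[OF iL])
    show "AE g in measure_pmf \<mu>. norm (Xf v g) \<le> norm (Lf v g)"
      using ut_single(2)[OF v] ut Lnn by (intro AE_pmfI) force
  qed simp
  have iXn: "integrable (measure_pmf \<mu>) (\<lambda>g. - Xf v g)" using iX by simp
  define m where "m = ?E \<mu> (Xf v)"
  have Xeq: "Xf v = (\<lambda>\<gamma>. ln (v (entry11 \<gamma>)))" by (rule ext) (simp add: Xf_def)
  have mX: "?E \<mu> (\<lambda>\<gamma>. ln (v (entry11 \<gamma>))) = m" unfolding m_def Xeq ..
  have mneg: "?E \<mu> (\<lambda>g. - Xf v g) = - m" unfolding m_def by simp
  define I where "I n = ?E (conv_pow \<mu> n) (\<lambda>\<gamma>. ln (opnorm v \<gamma>))" for n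
  have I_eq: "I n = ?E (replicate_pmf n \<mu>) (\<lambda>xs. Lf v (prodm xs))" for n
    by (simp add: I_def conv_pow_eq Lf_def)
  have key: "n * \<bar>m\<bar> \<le> I n \<and> I n \<le> ln 2 + ln (real n + 1) + ?E (replicate_pmf n \<mu>) (mlmax (Lf v))
     + ?E (replicate_pmf n \<mu>) (runmax (Xf v)) + ?E (replicate_pmf n \<mu>) (runmax (\<lambda>g. - Xf v g))" for n
  proof -
    let ?R = "replicate_pmf n \<mu>"
    define G where "G xs = ln 2 + ln (real n + 1) + mlmax (Lf v) xs + runmax (Xf v) xs + runmax (\<lambda>g. - Xf v g) (rev xs)" for xs
    have i1: "integrable (measure_pmf ?R) (mlmax (Lf v))" by (rule mlmax_int[OF iL])
    have i2: "integrable (measure_pmf ?R) (runmax (Xf v))" by (rule runmax_int2[OF iX])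
    have i3: "integrable (measure_pmf ?R) (\<lambda>xs. runmax (\<lambda>g. - Xf v g) (rev xs))"
      by (rule rev_int(1)[OF runmax_int2[OF iXn]])
    have iG: "integrable (measure_pmf ?R) G" unfolding G_def using i1 i2 i3 by simp
    have ae: "AE xs in measure_pmf ?R. \<bar>sum_list (map (Xf v) xs)\<bar> \<le> Lf v (prodm xs) \<and> Lf v (prodm xs) \<le> G xs"
      using AE_rep[of n \<mu>]
    proof eventually_elim
      case (elim xs)
      have u: "\<And>g. g \<in> set xs \<Longrightarrow> ut g" using elim ut by auto
      have d1: "\<bar>sum_list (map (Xf v) xs)\<bar> \<le> Lf v (prodm xs)" by (rule det_final(1)[OF v]) (rule u)
      have d2: "Lf v (prodm xs) \<le> ln 2 + ln (real (length xs) + 1) + mlmax (Lf v) xs + runmax (Xf v) xs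
       + runmax (\<lambda>g. - Xf v g) (rev xs)" by (rule det_final(2)[OF v]) (rule u)
      show ?case using d1 d2 elim unfolding G_def by simp
    qed
    have iP: "integrable (measure_pmf ?R) (\<lambda>xs. Lf v (prodm xs))"
    proof (rule Bochner_Integration.integrable_bound[OF iG])
      show "AE xs in measure_pmf ?R. norm (Lf v (prodm xs)) \<le> norm (G xs)"
        using ae by eventually_elim auto
    qed simp
    have iS: "integrable (measure_pmf ?R) (\<lambda>xs. sum_list (map (Xf v) xs))" by (rule int_sum(1)[OF iX])
    have "n * \<bar>m\<bar> = \<bar>?E ?R (\<lambda>xs. sum_list (map (Xf v) xs))\<bar>"
      using int_sum(2)[OF iX, of n] by (simp add: m_def abs_mult)
    also have "\<dots> \<le> ?E ?R (\<lambda>xs. \<bar>sum_list (map (Xf v) xs)\<bar>)" by (rule integral_abs_bound)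
    also have "\<dots> \<le> ?E ?R (\<lambda>xs. Lf v (prodm xs))"
      using ae iS iP by (intro integral_mono_AE) auto
    finally have lo: "n * \<bar>m\<bar> \<le> I n" using I_eq by simp
    have "I n \<le> ?E ?R G" unfolding I_eq using ae iP iG by (intro integral_mono_AE) auto
    also have "?E ?R G = ln 2 + ln (real n + 1) + ?E ?R (mlmax (Lf v))
     + ?E ?R (runmax (Xf v)) + ?E ?R (\<lambda>xs. runmax (\<lambda>g. - Xf v g) (rev xs))"
      unfolding G_def using i1 i2 i3 by simp
    also have "?E ?R (\<lambda>xs. runmax (\<lambda>g. - Xf v g) (rev xs)) = ?E ?R (runmax (\<lambda>g. - Xf v g))"
      by (rule rev_int(2)[OF runmax_int2[OF iXn]])
    finally show ?thesis using lo by simp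
  qed
  have conv: "(\<lambda>n. I n / real n) \<longlonglongrightarrow> \<bar>m\<bar>"
  proof (rule LIMSEQ_I)
    fix r :: real assume r: "0 < r"
    define \<epsilon> where "\<epsilon> = r / 8"
    have e: "\<epsilon> > 0" using r by (simp add: \<epsilon>_def)
    obtain C1 where C1: "\<And>n. ?E (replicate_pmf n \<mu>) (mlmax (Lf v)) \<le> n * \<epsilon> + C1"
      using mlmax_bound[OF iL e] by blast
    obtain C2 where C2: "\<And>n. ?E (replicate_pmf n \<mu>) (runmax (Xf v)) \<le> n * (max m 0 + \<epsilon>) + C2"
      using llnmax[OF iX e] unfolding m_def by blast
    obtain C3 where C3: "\<And>n. ?E (replicate_pmf n \<mu>) (runmax (\<lambda>g. - Xf v g)) \<le> n * (max (- m) 0 + \<epsilon>) + C3"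
      using llnmax[OF iXn e] unfolding mneg by blast
    define K where "K = 2 * ln 2 + C1 + C2 + C3"
    obtain N where N: "\<And>n. n \<ge> N \<Longrightarrow> K / real n + ln (real n) / real n < \<epsilon>"
      using small_eventually[OF e, of K] unfolding eventually_sequentially by blast
    have "\<bar>I n / real n - \<bar>m\<bar>\<bar> < r" if n: "n \<ge> max N 1" for n
    proof -
      have n1: "real n \<ge> 1" using n by simp
      have lnb: "ln (real n + 1) \<le> ln 2 + ln (real n)"
      proof -
        have "ln (real n + 1) \<le> ln (2 * real n)" using n1 by (intro ln_mono) auto
        also have "\<dots> = ln 2 + ln (real n)" using n1 by (simp add: ln_mult)
        finally show ?thesis .
      qed
      have mm: "max m 0 + max (- m) 0 = \<bar>m\<bar>" by auto
      have "I n \<le> ln 2 + ln (real n + 1) + (n * \<epsilon> + C1) + (n * (max m 0 + \<epsilon>) + C2) + (n * (max (- m) 0 + \<epsilon>) + C3)"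
        using key[of n] C1[of n] C2[of n] C3[of n] by linarith
      also have "\<dots> \<le> n * (\<bar>m\<bar> + 3 * \<epsilon>) + K + ln (real n)"
      proof -
        have mm2: "real n * max m 0 + real n * max (- m) 0 = \<bar>m\<bar> * real n"
          using mm by (metis distrib_left mult.commute)
        have e1: "ln 2 + ln (real n + 1) + (n * \<epsilon> + C1) + (n * (max m 0 + \<epsilon>) + C2) + (n * (max (- m) 0 + \<epsilon>) + C3)
           = ln 2 + ln (real n + 1) + C1 + C2 + C3 + 3 * (n * \<epsilon>) + (real n * max m 0 + real n * max (- m) 0)"
          by (simp add: algebra_simps)
        have e2: "n * (\<bar>m\<bar> + 3 * \<epsilon>) + K + ln (real n) = \<bar>m\<bar> * real n + 3 * (n * \<epsilon>) + K + ln (real n)"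
          by (simp add: algebra_simps)
        show ?thesis using lnb e1 e2 mm2 K_def by linarith
      qed
      finally have up: "I n / real n \<le> \<bar>m\<bar> + 3 * \<epsilon> + (K / real n + ln (real n) / real n)"
        using n1 by (simp add: field_simps)
      have lo: "\<bar>m\<bar> \<le> I n / real n" using key[of n] n1 by (simp add: field_simps)
      have Nn: "K / real n + ln (real n) / real n < \<epsilon>" using N[of n] n by simp
      have "I n / real n - \<bar>m\<bar> < 4 * \<epsilon>" using up Nn by linarith
      moreover have "4 * \<epsilon> < r" using r unfolding \<epsilon>_def by simp
      ultimately show ?thesis using lo by simp
    qed
    then show "\<exists>no. \<forall>n\<ge>no. norm (I n / real n - \<bar>m\<bar>) < r"
      by (intro exI[of _ "max N 1"]) auto
  qed
  have part2: "\<bar>m\<bar> = \<bar>?E \<mu> (\<lambda>\<gamma>. ln (v ((entry11 \<gamma>)\<^sup>2)))\<bar> / 2"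
  proof -
    have "?E \<mu> (\<lambda>\<gamma>. ln (v ((entry11 \<gamma>)\<^sup>2))) = ?E \<mu> (\<lambda>\<gamma>. 2 * Xf v \<gamma>)"
    proof (intro integral_cong_AE AE_pmfI)
      fix g assume g: "g \<in> set_pmf \<mu>"
      have "0 < v (entry11 g)" by (rule ut_single(1)[OF v ut[OF g]])
      then show "ln (v ((entry11 g)\<^sup>2)) = 2 * Xf v g"
        by (simp add: Xf_def power2_eq_square av(6) ln_mult)
    qed auto
    also have "\<dots> = 2 * m" unfolding m_def by simp
    finally show ?thesis by simp
  qed
  have part3: "m = 0" if sym: "map_pmf minv_sl2 \<mu> = \<mu>"
  proof -
    have "m = ?E (map_pmf minv_sl2 \<mu>) (Xf v)" unfolding m_def using sym by simp
    also have "\<dots> = ?E \<mu> (\<lambda>g. Xf v (minv_sl2 g))" by simp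
    also have "\<dots> = ?E \<mu> (\<lambda>g. - Xf v g)"
    proof (intro integral_cong_AE AE_pmfI)
      fix g assume g: "g \<in> set_pmf \<mu>"
      obtain a b d where gg: "g = (a, b, 0, d)" "a * d = 1" using ut_form[OF ut[OF g]] by blast
      have a0: "a \<noteq> 0" using gg(2) by auto
      have "d = inverse a" using gg(2) by (metis inverse_unique)
      then have "v d = inverse (v a)" using av(3)[OF a0] by simp
      then show "Xf v (minv_sl2 g) = - Xf v g" using gg by (simp add: Xf_def ln_inverse av(4)[OF a0])
    qed auto
    also have "\<dots> = - m" by (rule mneg)
    finally show ?thesis by simp
  qed
  show ?thesis
  proof (intro conjI impI)
    show "(\<lambda>n. ?E (conv_pow \<mu> n) (\<lambda>\<gamma>. ln (opnorm v \<gamma>)) / real n) \<longlonglongrightarrow> \<bar>?E \<mu> (\<lambda>\<gamma>. ln (v (entry11 \<gamma>)))\<bar>"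
      using conv unfolding I_def mX .
    show "\<bar>?E \<mu> (\<lambda>\<gamma>. ln (v (entry11 \<gamma>)))\<bar> = \<bar>?E \<mu> (\<lambda>\<gamma>. ln (v ((entry11 \<gamma>)\<^sup>2)))\<bar> / 2"
      using part2 unfolding mX .
    assume "map_pmf minv_sl2 \<mu> = \<mu>"
    then have "m = 0" by (rule part3)
    then show "(\<lambda>n. ?E (conv_pow \<mu> n) (\<lambda>\<gamma>. ln (opnorm v \<gamma>)) / real n) \<longlonglongrightarrow> 0"
      using conv unfolding I_def by simp
  qed
qed

end
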